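(* Every set strongly star Hurewicz space $X$ that is hereditarily metacompact (every subspace of $X$ is metacompact) is a Hurewicz space.
   Context: For a subset $A$ of a space $X$ and a collection $\mathcal{U}$ of subsets of $X$, ${\rm St}(A,\mathcal{U}) = \bigcup\{U \in \mathcal{U}: U \cap A \neq \emptyset\}$. A space is metacompact if every open cover has a point-finite open refinement. A space $X$ is Hurewicz if for each sequence $(\mathcal{U}_n: n \in \mathbb{N})$ of open covers of $X$ there are finite $\mathcal{V}_n \subset \mathcal{U}_n$ such that each $x \in X$ lies in $\bigcup\mathcal{V}_n$ for all but finitely many $n$. $X$ is set strongly star Hurewicz if for each nonempty $A \subset X$ and each sequence $(\mathcal{U}_n: n\in\mathbb{N})$ of collections of sets open in $X$ with $\overline{A} \subset \bigcup\mathcal{U}_n$ for all $n$, there are finite sets $F_n \subset \overline{A}$ such that each $x \in A$ lies in ${\rm St}(F_n,\mathcal{U}_n)$ for all but finitely many $n$. *)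

theory Defs
  imports "HOL-Analysis.Analysis"
begin

definition St :: "'a set \<Rightarrow> 'a set set \<Rightarrow> 'a set" where
  "St A \<U> = \<Union>{U \<in> \<U>. U \<inter> A \<noteq> {}}"

definition metacompact :: "'a topology \<Rightarrow> bool" where
  "metacompact X \<longleftrightarrow>
    (\<forall>\<U>. (\<forall>U\<in>\<U>. openin X U) \<and> \<Union>\<U> = topspace X \<longrightarrow>
      (\<exists>\<V>. (\<forall>V\<in>\<V>. openin X V) \<and> \<Union>\<V> = topspace X \<and>
            (\<forall>V\<in>\<V>. \<exists>U\<in>\<U>. V \<subseteq> U) \<and>
            (\<forall>x\<in>topspace X. finite {V\<in>\<V>. x \<in> V})))"

definition hereditarily_metacompact :: "'a topology \<Rightarrow> bool" where
  "hereditarily_metacompact X \<longleftrightarrow> (\<forall>S. S \<subseteq> topspace X \<longrightarrow> metacompact (subtopology X S))"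

definition Hurewicz :: "'a topology \<Rightarrow> bool" where
  "Hurewicz X \<longleftrightarrow>
    (\<forall>\<U> :: nat \<Rightarrow> 'a set set.
       (\<forall>n. (\<forall>U\<in>\<U> n. openin X U) \<and> \<Union>(\<U> n) = topspace X) \<longrightarrow>
       (\<exists>\<V>. (\<forall>n. finite (\<V> n) \<and> \<V> n \<subseteq> \<U> n) \<and>
             (\<forall>x\<in>topspace X. eventually (\<lambda>n. x \<in> \<Union>(\<V> n)) sequentially)))"

definition set_strongly_star_Hurewicz :: "'a topology \<Rightarrow> bool" where
  "set_strongly_star_Hurewicz X \<longleftrightarrow>
    (\<forall>A \<U>. A \<noteq> {} \<and> A \<subseteq> topspace X \<and>
       (\<forall>n::nat. (\<forall>U\<in>\<U> n. openin X U) \<and> X closure_of A \<subseteq> \<Union>(\<U> n)) \<longrightarrow>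
       (\<exists>F. (\<forall>n. finite (F n) \<and> F n \<subseteq> X closure_of A) \<and>
            (\<forall>x\<in>A. eventually (\<lambda>n. x \<in> St (F n) (\<U> n)) sequentially)))"

end

theory Submission
  imports Defs
begin

theorem mainTheorem3:
  fixes X :: "'a topology"
  assumes "set_strongly_star_Hurewicz X"
    and "hereditarily_metacompact X"
  shows "Hurewicz X"
proof (cases "topspace X = {}")
  case True
  then show ?thesis unfolding Hurewicz_def by (intro allI impI exI[of _ "\<lambda>n. {}"]) auto
next
  case False
  have "metacompact (subtopology X (topspace X))"
    using assms(2) unfolding hereditarily_metacompact_def by blast
  then have mc: "metacompact X" by simp
  show ?thesis unfolding Hurewicz_def
  proof (intro allI impI)
    fix U :: "nat \<Rightarrow> 'a set set"
    assume cov: "\<forall>n. (\<forall>U\<in>U n. openin X U) \<and> \<Union>(U n) = topspace X"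
    have "\<forall>n. \<exists>V. (\<forall>v\<in>V. openin X v) \<and> \<Union>V = topspace X \<and> (\<forall>v\<in>V. \<exists>u\<in>U n. v \<subseteq> u)
          \<and> (\<forall>x\<in>topspace X. finite {v\<in>V. x \<in> v})"
    proof
      fix n
      have "(\<forall>u\<in>U n. openin X u) \<and> \<Union>(U n) = topspace X" using cov by blast
      then show "\<exists>V. (\<forall>v\<in>V. openin X v) \<and> \<Union>V = topspace X \<and> (\<forall>v\<in>V. \<exists>u\<in>U n. v \<subseteq> u)
          \<and> (\<forall>x\<in>topspace X. finite {v\<in>V. x \<in> v})"
        by (rule mp[OF spec[OF mc[unfolded metacompact_def], of "U n"]])
    qed
    then obtain V where V0: "\<forall>n. (\<lambda>n V. (\<forall>v\<in>V. openin X v) \<and> \<Union>V = topspace X \<and> (\<forall>v\<in>V. \<exists>u\<in>U n. v \<subseteq> u)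
          \<and> (\<forall>x\<in>topspace X. finite {v\<in>V. x \<in> v})) n (V n)"
      by (rule choice[THEN exE]) (rule that)
    have V: "\<forall>n. (\<forall>v\<in>V n. openin X v) \<and> \<Union>(V n) = topspace X \<and> (\<forall>v\<in>V n. \<exists>u\<in>U n. v \<subseteq> u)
          \<and> (\<forall>x\<in>topspace X. finite {v\<in>V n. x \<in> v})" using V0 by simp
    define g where "g n v = (SOME u. u \<in> U n \<and> v \<subseteq> u)" for n v
    have g: "g n v \<in> U n \<and> v \<subseteq> g n v" if "v \<in> V n" for n v
    proof -
      have "\<exists>u. u \<in> U n \<and> v \<subseteq> u" using V that by blast
      then show ?thesis unfolding g_def by (rule someI_ex)
    qed
    have cl: "X closure_of topspace X = topspace X" by simp
    obtain F where F: "\<forall>n. finite (F n) \<and> F n \<subseteq> topspace X"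
      and Fe: "\<forall>x\<in>topspace X. eventually (\<lambda>n. x \<in> St (F n) (V n)) sequentially"
    proof -
      have "(\<forall>n. (\<forall>U\<in>V n. openin X U) \<and> X closure_of topspace X \<subseteq> \<Union>(V n))"
        using V cl by simp
      then have "\<exists>F. (\<forall>n. finite (F n) \<and> F n \<subseteq> X closure_of topspace X) \<and>
            (\<forall>x\<in>topspace X. eventually (\<lambda>n. x \<in> St (F n) (V n)) sequentially)"
        using assms(1) False unfolding set_strongly_star_Hurewicz_def by blast
      then show ?thesis using that cl by metis
    qed
    define W where "W n = g n ` {v\<in>V n. v \<inter> F n \<noteq> {}}" for n
    show "\<exists>W. (\<forall>n. finite (W n) \<and> W n \<subseteq> U n) \<and>
             (\<forall>x\<in>topspace X. eventually (\<lambda>n. x \<in> \<Union>(W n)) sequentially)"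
    proof (intro exI[of _ W] conjI allI ballI)
      fix n
      have eq: "{v\<in>V n. v \<inter> F n \<noteq> {}} = (\<Union>p\<in>F n. {v\<in>V n. p \<in> v})" by blast
      have "finite {v\<in>V n. v \<inter> F n \<noteq> {}}" unfolding eq using F V by blast
      then show "finite (W n)" unfolding W_def by simp
      show "W n \<subseteq> U n" unfolding W_def using g by blast
    next
      fix x assume "x \<in> topspace X"
      then have "eventually (\<lambda>n. x \<in> St (F n) (V n)) sequentially" using Fe by blast
      then show "eventually (\<lambda>n. x \<in> \<Union>(W n)) sequentially"
      proof (rule eventually_mono)
        fix n assume "x \<in> St (F n) (V n)"
        then obtain v where v: "v \<in> V n" "v \<inter> F n \<noteq> {}" "x \<in> v" unfolding St_def by blast
        then have "g n v \<in> W n" unfolding W_def by blast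
        moreover have "x \<in> g n v" using g[OF v(1)] v(3) by blast
        ultimately show "x \<in> \<Union>(W n)" by blast
      qed
    qed
  qed
qed

end
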